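(* Let $D\ge1$ and let $\hat{\vec{\mathcal{D}}}_\Theta\in\mathbb{C}^D$, $\Theta=1,\dots,n_q$, be vectors not all zero. For each $\Theta$ let $\hat{\t{e}}_\Theta\in\mathbb{C}^{D\times D}$ be symmetric ($\hat e_{\Theta,ij}=\hat e_{\Theta,ji}$). Define $$\hat{\vec{\mathcal{D}}}^{-1}_\Theta=\frac{\hat{\vec{\mathcal{D}}}^*_\Theta}{\sum_\Lambda\hat{\vec{\mathcal{D}}}_\Lambda\cdot\hat{\vec{\mathcal{D}}}^*_\Lambda},\qquad \hat{\t{g}}_{\Theta\Lambda}=\hat{\vec{\mathcal{D}}}_\Theta\otimes\hat{\vec{\mathcal{D}}}^{-1}_\Lambda,$$ and for $\hat{\vec u}\in\mathbb{C}^D$ the residual $\mathcal{R}(\hat{\vec u})=\sum_\Theta \sum_{i,j}\left|R_{\Theta,ij}\right|^2$ with $\t{R}_\Theta=\frac12\left(\hat{\vec{\mathcal{D}}}_\Theta\otimes\hat{\vec u}+\hat{\vec u}\otimes\hat{\vec{\mathcal{D}}}_\Theta\right)-\hat{\t{e}}_\Theta$. Then $\t{1}+\sum_\Theta\hat{\t{g}}_{\Theta\Theta}$ is invertible; set $\hat{\t{h}}=\left(\t{1}+\sum_\Theta\hat{\t{g}}_{\Theta\Theta}\right)^{-1}$. The residual $\mathcal{R}$ has a unique minimizer $\hat{\vec u}$, characterized by $$\left(\t{1}+\sum_\Theta\hat{\t{g}}_{\Theta\Theta}\right)\cdot\hat{\vec u}=\sum_\Theta\left(\hat{\vec{\mathcal{D}}}^{-1}_\Theta\cdot\hat{\t{e}}_\Theta+\hat{\t{e}}_\Theta\cdot\hat{\vec{\mathcal{D}}}^{-1}_\Theta\right),$$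 i.e. $\hat u_i=\sum_\Theta\sum_{l,m}\left(\hat{\mathcal{D}}^{-1}_{\Theta,l}\hat h_{im}+\hat h_{il}\hat{\mathcal{D}}^{-1}_{\Theta,m}\right)\hat e_{\Theta,lm}$. Furthermore the symmetrized gradients of this minimizer, $\hat e'_{\Theta,ij}=\frac12\left(\hat{\mathcal{D}}_{\Theta,i}\hat u_j+\hat u_i\hat{\mathcal{D}}_{\Theta,j}\right)$, are given by $\hat e'_{\Theta,ij}=\sum_\Lambda\sum_{l,m}\hat G_{\Theta\Lambda,ijlm}\hat e_{\Lambda,lm}$ with $$\hat G_{\Theta\Lambda,ijlm}=\frac12\left(\hat g_{\Theta\Lambda,il}\hat h_{jm}+\hat g_{\Theta\Lambda,im}\hat h_{jl}+\hat g_{\Theta\Lambda,jl}\hat h_{im}+\hat g_{\Theta\Lambda,jm}\hat h_{il}\right).$$ Finally, in the single-element case $n_q=1$ one has $\hat{\t{h}}=\t{1}-\frac12\hat{\t{g}}_{11}$.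
   Context: Small-strain compatibility projection at a fixed nonzero wavevector: $\hat{\vec{\mathcal{D}}}_\Theta$ is the Fourier symbol of the (possibly discrete) gradient operator evaluated in element (evaluation point) $\Theta$ of a voxel, $\hat{\t{e}}_\Theta$ the Fourier coefficient of the strain tensor in element $\Theta$, and $\hat{\vec u}$ the Fourier coefficient of the displacement. $\otimes$ is the outer product, $\vec a\cdot\t{B}$ and $\t{B}\cdot\vec a$ denote vector–matrix contractions, $\t{1}$ the identity matrix, and the star complex conjugation. *)

theory Defs
  imports "HOL-Analysis.Analysis"
begin

text \<open>Gradient symbols Dv :: 'q => complex^'d, one per element Theta in the finite
  index type 'q (so n_q = CARD('q)); strain coefficients e :: 'q => complex^'d^'d.\<close>

definition Dnorm :: "('q::finite \<Rightarrow> complex^'d::finite) \<Rightarrow> complex" where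
  "Dnorm Dv = (\<Sum>\<Lambda>\<in>UNIV. \<Sum>i\<in>UNIV. Dv \<Lambda> $ i * cnj (Dv \<Lambda> $ i))"

definition Dinv :: "('q::finite \<Rightarrow> complex^'d::finite) \<Rightarrow> 'q \<Rightarrow> complex^'d" where
  "Dinv Dv \<Theta> = (\<chi> i. cnj (Dv \<Theta> $ i) / Dnorm Dv)"

definition outer :: "complex^'d::finite \<Rightarrow> complex^'d \<Rightarrow> complex^'d^'d" where
  "outer a b = (\<chi> i j. a $ i * b $ j)"

definition gmat :: "('q::finite \<Rightarrow> complex^'d::finite) \<Rightarrow> 'q \<Rightarrow> 'q \<Rightarrow> complex^'d^'d" where
  "gmat Dv \<Theta> \<Lambda> = outer (Dv \<Theta>) (Dinv Dv \<Lambda>)"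

definition Rmat :: "('q::finite \<Rightarrow> complex^'d::finite) \<Rightarrow> ('q \<Rightarrow> complex^'d^'d) \<Rightarrow> complex^'d \<Rightarrow> 'q \<Rightarrow> complex^'d^'d" where
  "Rmat Dv e u \<Theta> = (\<chi> i j. (outer (Dv \<Theta>) u $ i $ j + outer u (Dv \<Theta>) $ i $ j) / 2 - e \<Theta> $ i $ j)"

definition resid :: "('q::finite \<Rightarrow> complex^'d::finite) \<Rightarrow> ('q \<Rightarrow> complex^'d^'d) \<Rightarrow> complex^'d \<Rightarrow> real" where
  "resid Dv e u = (\<Sum>\<Theta>\<in>UNIV. \<Sum>i\<in>UNIV. \<Sum>j\<in>UNIV. (cmod (Rmat Dv e u \<Theta> $ i $ j))^2)"

definition Amat :: "('q::finite \<Rightarrow> complex^'d::finite) \<Rightarrow> complex^'d^'d" where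
  "Amat Dv = mat 1 + (\<Sum>\<Theta>\<in>UNIV. gmat Dv \<Theta> \<Theta>)"

definition hmat :: "('q::finite \<Rightarrow> complex^'d::finite) \<Rightarrow> complex^'d^'d" where
  "hmat Dv = matrix_inv (Amat Dv)"

definition rhs :: "('q::finite \<Rightarrow> complex^'d::finite) \<Rightarrow> ('q \<Rightarrow> complex^'d^'d) \<Rightarrow> complex^'d" where
  "rhs Dv e = (\<Sum>\<Theta>\<in>UNIV. Dinv Dv \<Theta> v* e \<Theta> + e \<Theta> *v Dinv Dv \<Theta>)"

definition Gten :: "('q::finite \<Rightarrow> complex^'d::finite) \<Rightarrow> 'q \<Rightarrow> 'q \<Rightarrow> 'd \<Rightarrow> 'd \<Rightarrow> 'd \<Rightarrow> 'd \<Rightarrow> complex" where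
  "Gten Dv \<Theta> \<Lambda> i j l m =
     (gmat Dv \<Theta> \<Lambda> $ i $ l * hmat Dv $ j $ m + gmat Dv \<Theta> \<Lambda> $ i $ m * hmat Dv $ j $ l
      + gmat Dv \<Theta> \<Lambda> $ j $ l * hmat Dv $ i $ m + gmat Dv \<Theta> \<Lambda> $ j $ m * hmat Dv $ i $ l) / 2"

end

theory Submission
  imports Defs
begin

definition Sg :: "complex^'d::finite \<Rightarrow> complex^'d \<Rightarrow> 'd \<Rightarrow> 'd \<Rightarrow> complex" where
  "Sg D u i j = (D$i*u$j + u$i*D$j)/2"

lemma cmod_add_sq: "(cmod (a + b))^2 = (cmod a)^2 + (cmod b)^2 + 2 * Re (a * cnj b)"
  unfolding cmod_power2 by (simp add: power2_eq_square algebra_simps)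

lemma bil1:
  fixes D u w :: "complex^'d::finite"
  shows "(\<Sum>i\<in>UNIV. \<Sum>j\<in>UNIV. Sg D u i j * cnj (Sg D w i j))
     = (1/2) * (\<Sum>j\<in>UNIV. cnj (w$j) * ((\<Sum>i\<in>UNIV. D$i * cnj (D$i)) * u$j + D$j * (\<Sum>i\<in>UNIV. cnj (D$i) * u$i)))"
proof -
  define a where "a i j = D$i*cnj(D$i)*(u$j*cnj(w$j))" for i j
  define c where "c i j = (D$i*cnj(w$i))*(u$j*cnj(D$j))" for i j
  have e: "Sg D u i j * cnj (Sg D w i j) = (1/4) * (a i j + a j i + c i j + c j i)" for i j
    by (simp add: Sg_def a_def c_def algebra_simps)
  have "(\<Sum>i\<in>UNIV. \<Sum>j\<in>UNIV. Sg D u i j * cnj (Sg D w i j))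
     = (1/4) * ((\<Sum>i\<in>UNIV. \<Sum>j\<in>UNIV. a i j) + (\<Sum>i\<in>UNIV. \<Sum>j\<in>UNIV. a j i) + (\<Sum>i\<in>UNIV. \<Sum>j\<in>UNIV. c i j) + (\<Sum>i\<in>UNIV. \<Sum>j\<in>UNIV. c j i))"
    by (simp add: e sum.distrib flip: sum_divide_distrib)
  also have "\<dots> = (1/2) * ((\<Sum>i\<in>UNIV. \<Sum>j\<in>UNIV. a i j) + (\<Sum>i\<in>UNIV. \<Sum>j\<in>UNIV. c i j))"
    by (simp add: sum.swap[of "\<lambda>i j. a j i"] sum.swap[of "\<lambda>i j. c j i"] algebra_simps)
  also have "(\<Sum>i\<in>UNIV. \<Sum>j\<in>UNIV. a i j) = (\<Sum>j\<in>UNIV. cnj (w$j) * ((\<Sum>i\<in>UNIV. D$i * cnj (D$i)) * u$j))"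
    unfolding a_def by (subst sum.swap) (simp add: sum_distrib_left sum_distrib_right algebra_simps)
  also have "(\<Sum>i\<in>UNIV. \<Sum>j\<in>UNIV. c i j) = (\<Sum>j\<in>UNIV. cnj (w$j) * (D$j * (\<Sum>i\<in>UNIV. cnj (D$i) * u$i)))"
    by (simp add: c_def sum_distrib_left algebra_simps)
  finally show ?thesis by (simp add: sum.distrib algebra_simps)
qed


lemma bil2:
  fixes D w :: "complex^'d::finite" and E :: "complex^'d^'d"
  assumes sym: "\<And>i j. E$i$j = E$j$i"
  shows "(\<Sum>i\<in>UNIV. \<Sum>j\<in>UNIV. E$i$j * cnj (Sg D w i j)) = (\<Sum>j\<in>UNIV. cnj (w$j) * (\<Sum>i\<in>UNIV. cnj (D$i) * E$i$j))"
proof -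
  have e: "E$i$j * cnj (Sg D w i j) = (1/2) * (E$i$j * cnj (D$i) * cnj (w$j) + E$j$i * cnj (D$j) * cnj (w$i))" for i j
    by (simp add: Sg_def sym[of i j] algebra_simps)
  have "(\<Sum>i\<in>UNIV. \<Sum>j\<in>UNIV. E$i$j * cnj (Sg D w i j)) = (1/2) * ((\<Sum>i\<in>UNIV. \<Sum>j\<in>UNIV. E$i$j * cnj (D$i) * cnj (w$j)) + (\<Sum>i\<in>UNIV. \<Sum>j\<in>UNIV. E$j$i * cnj (D$j) * cnj (w$i)))"
    by (simp add: e sum.distrib flip: sum_divide_distrib)
  also have "(\<Sum>i\<in>UNIV. \<Sum>j\<in>UNIV. E$j$i * cnj (D$j) * cnj (w$i)) = (\<Sum>i\<in>UNIV. \<Sum>j\<in>UNIV. E$i$j * cnj (D$i) * cnj (w$j))"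
    by (rule sum.swap)
  also have "(\<Sum>i\<in>UNIV. \<Sum>j\<in>UNIV. E$i$j * cnj (D$i) * cnj (w$j)) = (\<Sum>j\<in>UNIV. cnj (w$j) * (\<Sum>i\<in>UNIV. cnj (D$i) * E$i$j))"
    by (subst sum.swap) (simp add: sum_distrib_left algebra_simps)
  finally show ?thesis by simp
qed

lemma Aexp: "(Amat Dv *v u)$j = u$j + (\<Sum>\<Theta>\<in>UNIV. Dv \<Theta> $j * (\<Sum>i\<in>UNIV. cnj(Dv \<Theta> $i) * u$i)) / Dnorm Dv"
proof -
  have "(Amat Dv *v u)$j = u$j + ((\<Sum>\<Theta>\<in>UNIV. gmat Dv \<Theta> \<Theta>) *v u)$j"
    unfolding Amat_def matrix_vector_mult_add_rdistrib by simp
  also have "((\<Sum>\<Theta>\<in>UNIV. gmat Dv \<Theta> \<Theta>) *v u)$j = (\<Sum>\<Theta>\<in>UNIV. Dv \<Theta> $j * (\<Sum>i\<in>UNIV. cnj(Dv \<Theta> $i) * u$i)) / Dnorm Dv"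
    unfolding gmat_def outer_def Dinv_def matrix_vector_mult_def
    by (simp add: sum_component sum_distrib_right sum_distrib_left sum_divide_distrib mult.assoc mult.left_commute)
      (rule sum.swap)
  finally show ?thesis .
qed

lemma rhsexp:
  assumes sym: "\<And>\<Theta> i j. e \<Theta> $ i $ j = e \<Theta> $ j $ i"
  shows "(rhs Dv e)$j = 2 * (\<Sum>\<Theta>\<in>UNIV. \<Sum>i\<in>UNIV. cnj(Dv \<Theta> $i) * e \<Theta> $i$j) / Dnorm Dv"
  by (simp add: rhs_def Dinv_def matrix_vector_mult_def vector_matrix_mult_def sum_component
      sum.distrib sum_distrib_left sum_distrib_right sum_divide_distrib algebra_simps sym[of _ j])


definition Qf :: "('q::finite \<Rightarrow> complex^'d::finite) \<Rightarrow> complex^'d \<Rightarrow> real" where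
  "Qf Dv w = (\<Sum>\<Theta>\<in>UNIV. \<Sum>i\<in>UNIV. \<Sum>j\<in>UNIV. (cmod (Sg (Dv \<Theta>) w i j))^2)"

lemma Dnorm_real: "Dnorm Dv = of_real (\<Sum>\<Lambda>\<in>UNIV. \<Sum>i\<in>UNIV. (cmod (Dv \<Lambda> $ i))^2)"
  by (simp only: Dnorm_def of_real_sum complex_norm_square)

lemma Dnorm_pos:
  fixes Dv :: "'q::finite \<Rightarrow> complex^'d::finite"
  assumes nz: "\<exists>\<Theta>. Dv \<Theta> \<noteq> 0"
  shows "(\<Sum>\<Lambda>\<in>UNIV. \<Sum>i\<in>UNIV. (cmod (Dv \<Lambda> $ i))^2) > 0"
proof -
  obtain T where "Dv T \<noteq> 0" using nz by blast
  then obtain k where k: "Dv T $ k \<noteq> 0" by (metis vec_eq_iff zero_index)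
  have "(cmod (Dv T $ k))^2 > 0" using k by simp
  also have "(cmod (Dv T $ k))^2 \<le> (\<Sum>i\<in>UNIV. (cmod (Dv T $ i))^2)"
    by (rule member_le_sum) auto
  also have "\<dots> \<le> (\<Sum>\<Lambda>\<in>UNIV. \<Sum>i\<in>UNIV. (cmod (Dv \<Lambda> $ i))^2)"
    by (rule member_le_sum[where f="\<lambda>\<Lambda>. \<Sum>i\<in>UNIV. (cmod (Dv \<Lambda> $ i))^2"]) (auto intro: sum_nonneg)
  finally show ?thesis .
qed

lemma Dnorm_nz:
  assumes nz: "\<exists>\<Theta>. Dv \<Theta> \<noteq> 0"
  shows "Dnorm Dv \<noteq> 0"
  using Dnorm_pos[OF nz] unfolding Dnorm_real by (metis of_real_eq_0_iff less_irrefl)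

lemma key1:
  assumes N: "Dnorm Dv \<noteq> 0"
  shows "(\<Sum>\<Theta>\<in>UNIV. \<Sum>i\<in>UNIV. \<Sum>j\<in>UNIV. Sg (Dv \<Theta>) u i j * cnj (Sg (Dv \<Theta>) w i j))
     = Dnorm Dv / 2 * (\<Sum>j\<in>UNIV. cnj (w$j) * (Amat Dv *v u)$j)"
proof -
  have "(\<Sum>\<Theta>\<in>UNIV. \<Sum>i\<in>UNIV. \<Sum>j\<in>UNIV. Sg (Dv \<Theta>) u i j * cnj (Sg (Dv \<Theta>) w i j))
     = (1/2) * (\<Sum>\<Theta>\<in>UNIV. \<Sum>j\<in>UNIV. cnj (w$j) * ((\<Sum>i\<in>UNIV. Dv \<Theta>$i * cnj (Dv \<Theta>$i)) * u$j + Dv \<Theta>$j * (\<Sum>i\<in>UNIV. cnj (Dv \<Theta>$i) * u$i)))"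
    by (simp add: bil1 sum_distrib_left)
  also have "(\<Sum>\<Theta>\<in>UNIV. \<Sum>j\<in>UNIV. cnj (w$j) * ((\<Sum>i\<in>UNIV. Dv \<Theta>$i * cnj (Dv \<Theta>$i)) * u$j + Dv \<Theta>$j * (\<Sum>i\<in>UNIV. cnj (Dv \<Theta>$i) * u$i)))
      = (\<Sum>j\<in>UNIV. \<Sum>\<Theta>\<in>UNIV. cnj (w$j) * ((\<Sum>i\<in>UNIV. Dv \<Theta>$i * cnj (Dv \<Theta>$i)) * u$j + Dv \<Theta>$j * (\<Sum>i\<in>UNIV. cnj (Dv \<Theta>$i) * u$i)))"
    by (rule sum.swap)
  also have "\<dots> = (\<Sum>j\<in>UNIV. cnj (w$j) * (Dnorm Dv * u$j + (\<Sum>\<Theta>\<in>UNIV. Dv \<Theta> $j * (\<Sum>i\<in>UNIV. cnj(Dv \<Theta> $i) * u$i))))"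
    by (rule sum.cong) (simp_all add: Dnorm_def sum_distrib_left sum_distrib_right sum.distrib distrib_left)
  also have "(1/2) * \<dots> = Dnorm Dv / 2 * (\<Sum>j\<in>UNIV. cnj (w$j) * (Amat Dv *v u)$j)"
    unfolding Aexp sum_distrib_left using N
    by (intro sum.cong) (simp_all add: field_simps)
  finally show ?thesis .
qed

lemma key2:
  assumes N: "Dnorm Dv \<noteq> 0" and sym: "\<And>\<Theta> i j. e \<Theta> $ i $ j = e \<Theta> $ j $ i"
  shows "(\<Sum>\<Theta>\<in>UNIV. \<Sum>i\<in>UNIV. \<Sum>j\<in>UNIV. e \<Theta> $i$j * cnj (Sg (Dv \<Theta>) w i j))
     = Dnorm Dv / 2 * (\<Sum>j\<in>UNIV. cnj (w$j) * (rhs Dv e)$j)"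
proof -
  have "(\<Sum>\<Theta>\<in>UNIV. \<Sum>i\<in>UNIV. \<Sum>j\<in>UNIV. e \<Theta> $i$j * cnj (Sg (Dv \<Theta>) w i j))
     = (\<Sum>\<Theta>\<in>UNIV. \<Sum>j\<in>UNIV. cnj (w$j) * (\<Sum>i\<in>UNIV. cnj (Dv \<Theta>$i) * e \<Theta>$i$j))"
    by (simp add: bil2 sym)
  also have "\<dots> = (\<Sum>j\<in>UNIV. \<Sum>\<Theta>\<in>UNIV. cnj (w$j) * (\<Sum>i\<in>UNIV. cnj (Dv \<Theta>$i) * e \<Theta>$i$j))"
    by (rule sum.swap)
  also have "\<dots> = Dnorm Dv / 2 * (\<Sum>j\<in>UNIV. cnj (w$j) * (rhs Dv e)$j)"
    unfolding rhsexp[OF sym] sum_distrib_left using N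
    by (intro sum.cong) (simp_all add: field_simps sum_distrib_left)
  finally show ?thesis .
qed

lemma Rmat_add: "Rmat Dv e (u + w) \<Theta> $ i $ j = Rmat Dv e u \<Theta> $ i $ j + Sg (Dv \<Theta>) w i j"
  by (simp add: Rmat_def outer_def Sg_def algebra_simps add_divide_distrib)

lemma Rmat_eq: "Rmat Dv e u \<Theta> $ i $ j = Sg (Dv \<Theta>) u i j - e \<Theta> $ i $ j"
  by (simp add: Rmat_def outer_def Sg_def)

lemma resid_expand:
  "resid Dv e (u + w) = resid Dv e u + Qf Dv w
     + 2 * Re (\<Sum>\<Theta>\<in>UNIV. \<Sum>i\<in>UNIV. \<Sum>j\<in>UNIV. Rmat Dv e u \<Theta> $i$j * cnj (Sg (Dv \<Theta>) w i j))"
  by (simp add: resid_def Qf_def Rmat_add cmod_add_sq sum.distrib sum_distrib_left)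

lemma cross_zero:
  assumes N: "Dnorm Dv \<noteq> 0" and sym: "\<And>\<Theta> i j. e \<Theta> $ i $ j = e \<Theta> $ j $ i"
    and A: "Amat Dv *v u = rhs Dv e"
  shows "(\<Sum>\<Theta>\<in>UNIV. \<Sum>i\<in>UNIV. \<Sum>j\<in>UNIV. Rmat Dv e u \<Theta> $i$j * cnj (Sg (Dv \<Theta>) w i j)) = 0"
proof -
  have "(\<Sum>\<Theta>\<in>UNIV. \<Sum>i\<in>UNIV. \<Sum>j\<in>UNIV. Rmat Dv e u \<Theta> $i$j * cnj (Sg (Dv \<Theta>) w i j))
    = (\<Sum>\<Theta>\<in>UNIV. \<Sum>i\<in>UNIV. \<Sum>j\<in>UNIV. Sg (Dv \<Theta>) u i j * cnj (Sg (Dv \<Theta>) w i j))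
     - (\<Sum>\<Theta>\<in>UNIV. \<Sum>i\<in>UNIV. \<Sum>j\<in>UNIV. e \<Theta> $i$j * cnj (Sg (Dv \<Theta>) w i j))"
    by (simp add: Rmat_eq left_diff_distrib sum_subtractf)
  also have "\<dots> = 0" unfolding key1[OF N] key2[OF N sym] A by simp
  finally show ?thesis .
qed

lemma Qf_nonneg: "Qf Dv w \<ge> 0"
  unfolding Qf_def by (intro sum_nonneg) auto

lemma Qf_zero:
  assumes nz: "\<exists>\<Theta>. Dv \<Theta> \<noteq> 0" and Q: "Qf Dv w = 0"
  shows "w = 0"
proof -
  have all: "Sg (Dv \<Theta>) w i j = 0" for \<Theta> i j
  proof -
    have "(\<Sum>i\<in>UNIV. \<Sum>j\<in>UNIV. (cmod (Sg (Dv \<Theta>) w i j))^2) = 0"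
      using Q unfolding Qf_def by (subst (asm) sum_nonneg_eq_0_iff) (auto intro!: sum_nonneg)
    hence "(\<Sum>j\<in>UNIV. (cmod (Sg (Dv \<Theta>) w i j))^2) = 0"
      by (subst (asm) sum_nonneg_eq_0_iff) (auto intro!: sum_nonneg)
    hence "(cmod (Sg (Dv \<Theta>) w i j))^2 = 0"
      by (subst (asm) sum_nonneg_eq_0_iff) auto
    thus ?thesis by simp
  qed
  obtain T where "Dv T \<noteq> 0" using nz by blast
  then obtain k where k: "Dv T $ k \<noteq> 0" by (metis vec_eq_iff zero_index)
  have wk: "w $ k = 0" using all[of T k k] k by (simp add: Sg_def)
  have "w $ j = 0" for j using all[of T k j] k wk by (simp add: Sg_def)
  thus ?thesis by (simp add: vec_eq_iff)
qed


lemma Qf_of_real: "complex_of_real (Qf Dv w) = (\<Sum>\<Theta>\<in>UNIV. \<Sum>i\<in>UNIV. \<Sum>j\<in>UNIV. Sg (Dv \<Theta>) w i j * cnj (Sg (Dv \<Theta>) w i j))"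
  by (simp only: Qf_def of_real_sum complex_norm_square)

lemma A_inv:
  fixes Dv :: "'q::finite \<Rightarrow> complex^'d::finite"
  assumes nz: "\<exists>\<Theta>. Dv \<Theta> \<noteq> 0"
  shows "invertible (Amat Dv)"
proof -
  have "\<forall>x. Amat Dv *v x = 0 \<longrightarrow> x = 0"
  proof (intro allI impI)
    fix x assume "Amat Dv *v x = 0"
    hence "complex_of_real (Qf Dv x) = 0"
      unfolding Qf_of_real key1[OF Dnorm_nz[OF nz]] by simp
    hence "Qf Dv x = 0" by simp
    thus "x = 0" by (rule Qf_zero[OF nz])
  qed
  thus ?thesis using invertible_left_inverse matrix_left_invertible_ker by blast
qed

lemma hmat_props:
  assumes "invertible (Amat Dv)"
  shows "Amat Dv ** hmat Dv = mat 1 \<and> hmat Dv ** Amat Dv = mat 1"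
  using assms unfolding invertible_def hmat_def matrix_inv_def by (rule someI_ex)

lemma resid_min:
  assumes N: "Dnorm Dv \<noteq> 0" and sym: "\<And>\<Theta> i j. e \<Theta> $ i $ j = e \<Theta> $ j $ i"
    and A: "Amat Dv *v u = rhs Dv e"
  shows "resid Dv e v = resid Dv e u + Qf Dv (v - u)"
  using resid_expand[of Dv e u "v - u"] cross_zero[OF N sym A, of "v - u"] by simp

lemma u_formula:
  fixes h :: "complex^'d::finite^'d"
  shows "(h *v rhs Dv e) $ i = (\<Sum>\<Theta>\<in>UNIV. \<Sum>l\<in>UNIV. \<Sum>m\<in>UNIV.
               (Dinv Dv \<Theta> $ l * h $ i $ m + h $ i $ l * Dinv Dv \<Theta> $ m) * e \<Theta> $ l $ m)"
proof -
  have "(h *v rhs Dv e) $ i = (\<Sum>m\<in>UNIV. \<Sum>\<Theta>\<in>UNIV. \<Sum>l\<in>UNIV. Dinv Dv \<Theta> $ l * h $ i $ m * e \<Theta> $ l $ m)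
     + (\<Sum>m\<in>UNIV. \<Sum>\<Theta>\<in>UNIV. \<Sum>l\<in>UNIV. h $ i $ m * Dinv Dv \<Theta> $ l * e \<Theta> $ m $ l)"
    by (simp add: rhs_def matrix_vector_mult_def vector_matrix_mult_def sum_component
        distrib_left sum.distrib sum_distrib_left mult_ac)
  also have "(\<Sum>m\<in>UNIV. \<Sum>\<Theta>\<in>UNIV. \<Sum>l\<in>UNIV. Dinv Dv \<Theta> $ l * h $ i $ m * e \<Theta> $ l $ m)
      = (\<Sum>\<Theta>\<in>UNIV. \<Sum>l\<in>UNIV. \<Sum>m\<in>UNIV. Dinv Dv \<Theta> $ l * h $ i $ m * e \<Theta> $ l $ m)"
    by (subst sum.swap) (subst (2) sum.swap, simp)
  also have "(\<Sum>m\<in>UNIV. \<Sum>\<Theta>\<in>UNIV. \<Sum>l\<in>UNIV. h $ i $ m * Dinv Dv \<Theta> $ l * e \<Theta> $ m $ l)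
      = (\<Sum>\<Theta>\<in>UNIV. \<Sum>m\<in>UNIV. \<Sum>l\<in>UNIV. h $ i $ m * Dinv Dv \<Theta> $ l * e \<Theta> $ m $ l)"
    by (rule sum.swap)
  finally show ?thesis by (simp add: distrib_right sum.distrib)
qed

lemma G_formula:
  assumes uf: "\<And>i. u $ i = (\<Sum>\<Theta>\<in>UNIV. \<Sum>l\<in>UNIV. \<Sum>m\<in>UNIV.
               (Dinv Dv \<Theta> $ l * hmat Dv $ i $ m + hmat Dv $ i $ l * Dinv Dv \<Theta> $ m) * e \<Theta> $ l $ m)"
  shows "(Dv \<Theta> $ i * u $ j + u $ i * Dv \<Theta> $ j) / 2 =
               (\<Sum>\<Lambda>\<in>UNIV. \<Sum>l\<in>UNIV. \<Sum>m\<in>UNIV. Gten Dv \<Theta> \<Lambda> i j l m * e \<Lambda> $ l $ m)"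
proof -
  define t where "t i \<Lambda> l m = (Dinv Dv \<Lambda> $ l * hmat Dv $ i $ m + hmat Dv $ i $ l * Dinv Dv \<Lambda> $ m) * e \<Lambda> $ l $ m" for i \<Lambda> l m
  have "(Dv \<Theta> $ i * u $ j + u $ i * Dv \<Theta> $ j) / 2 = (\<Sum>\<Lambda>\<in>UNIV. \<Sum>l\<in>UNIV. \<Sum>m\<in>UNIV. (Dv \<Theta> $ i * t j \<Lambda> l m + t i \<Lambda> l m * Dv \<Theta> $ j) / 2)"
    unfolding uf[of i] uf[of j] t_def[symmetric] sum_divide_distrib sum_distrib_left sum_distrib_right sum.distrib[symmetric]
      add_divide_distrib by (rule refl)
  also have "\<dots> = (\<Sum>\<Lambda>\<in>UNIV. \<Sum>l\<in>UNIV. \<Sum>m\<in>UNIV. Gten Dv \<Theta> \<Lambda> i j l m * e \<Lambda> $ l $ m)"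
    by (intro sum.cong refl) (simp add: t_def Gten_def gmat_def outer_def algebra_simps add_divide_distrib)
  finally show ?thesis .
qed

lemma mat_rd: "(A + B) ** (C::'a::semiring_1^'n^'m) = A ** C + B ** C"
  by (simp add: matrix_matrix_mult_def vec_eq_iff distrib_right sum.distrib)

lemma mat_ld: "(A::'a::ring_1^'n^'m) ** (B - C) = A ** B - A ** C"
  by (simp add: matrix_matrix_mult_def vec_eq_iff right_diff_distrib sum_subtractf)

lemma single_case:
  fixes Dv :: "'q::finite \<Rightarrow> complex^'d::finite"
  assumes nz: "\<exists>\<Theta>. Dv \<Theta> \<noteq> 0" and c: "CARD('q) = 1"
  shows "hmat Dv = mat 1 - scaleR (1/2) (gmat Dv T T)"
proof -
  obtain x :: 'q where "UNIV = {x}" using c card_1_singleton_iff[of "UNIV::'q set"] by auto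
  hence U: "UNIV = {T}" by (metis UNIV_I singletonD)
  have N: "Dnorm Dv \<noteq> 0" by (rule Dnorm_nz[OF nz])
  let ?g = "gmat Dv T T"
  have A: "Amat Dv = mat 1 + ?g" unfolding Amat_def U by simp
  have Nd: "Dnorm Dv = (\<Sum>j\<in>UNIV. Dv T $ j * cnj (Dv T $ j))" unfolding Dnorm_def U by simp
  have gg: "?g ** ?g = ?g"
  proof -
    have "(?g ** ?g) $ i $ k = ?g $ i $ k" for i k
    proof -
      have "(?g ** ?g) $ i $ k = (\<Sum>j\<in>UNIV. Dv T $ i * (cnj (Dv T $ j) / Dnorm Dv) * (Dv T $ j * (cnj (Dv T $ k) / Dnorm Dv)))"
        by (simp add: gmat_def outer_def Dinv_def matrix_matrix_mult_def)
      also have "\<dots> = Dv T $ i * cnj (Dv T $ k) / Dnorm Dv * ((\<Sum>j\<in>UNIV. Dv T $ j * cnj (Dv T $ j)) / Dnorm Dv)"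
        by (simp add: sum_distrib_left sum_divide_distrib mult_ac)
      also have "\<dots> = ?g $ i $ k" using N unfolding Nd[symmetric]
        by (simp add: gmat_def outer_def Dinv_def)
      finally show ?thesis .
    qed
    thus ?thesis by (simp add: vec_eq_iff)
  qed
  have "Amat Dv ** (mat 1 - scaleR (1/2) ?g) = (mat 1 - scaleR (1/2) ?g) + ?g ** (mat 1 - scaleR (1/2) ?g)"
    unfolding A mat_rd[of "mat 1" ?g] matrix_mul_lid ..
  also have "?g ** (mat 1 - scaleR (1/2) ?g) = ?g - scaleR (1/2) (?g ** ?g)"
    unfolding mat_ld matrix_mul_rid matrix_scalar_ac scalar_matrix_assoc ..
  also have "(mat 1 - scaleR (1/2) ?g) + (?g - scaleR (1/2) (?g ** ?g)) = mat 1" unfolding gg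
    by (simp add: algebra_simps scaleR_diff_left[symmetric])
  finally have AB: "Amat Dv ** (mat 1 - scaleR (1/2) ?g) = mat 1" .
  have hA: "hmat Dv ** Amat Dv = mat 1" using hmat_props[OF A_inv[OF nz]] by blast
  have "hmat Dv = hmat Dv ** (Amat Dv ** (mat 1 - scaleR (1/2) ?g))" unfolding AB by simp
  also have "\<dots> = mat 1 - scaleR (1/2) ?g" unfolding matrix_mul_assoc hA by simp
  finally show ?thesis .
qed

theorem mainTheorem6:
  fixes Dv :: "'q::finite \<Rightarrow> complex^'d::finite"
    and e :: "'q \<Rightarrow> complex^'d^'d"
  assumes nz: "\<exists>\<Theta>. Dv \<Theta> \<noteq> 0"
    and sym: "\<And>\<Theta> i j. e \<Theta> $ i $ j = e \<Theta> $ j $ i"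
  shows "invertible (Amat Dv)
    \<and> (\<exists>!u. \<forall>v. resid Dv e u \<le> resid Dv e v)
    \<and> (\<forall>u. (\<forall>v. resid Dv e u \<le> resid Dv e v) \<longleftrightarrow> Amat Dv *v u = rhs Dv e)
    \<and> (\<forall>u. (\<forall>v. resid Dv e u \<le> resid Dv e v) \<longrightarrow>
          (\<forall>i. u $ i = (\<Sum>\<Theta>\<in>UNIV. \<Sum>l\<in>UNIV. \<Sum>m\<in>UNIV.
               (Dinv Dv \<Theta> $ l * hmat Dv $ i $ m + hmat Dv $ i $ l * Dinv Dv \<Theta> $ m) * e \<Theta> $ l $ m))
        \<and> (\<forall>\<Theta> i j. (Dv \<Theta> $ i * u $ j + u $ i * Dv \<Theta> $ j) / 2 =
               (\<Sum>\<Lambda>\<in>UNIV. \<Sum>l\<in>UNIV. \<Sum>m\<in>UNIV. Gten Dv \<Theta> \<Lambda> i j l m * e \<Lambda> $ l $ m)))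
    \<and> (CARD('q) = 1 \<longrightarrow> (\<forall>\<Theta>. hmat Dv = mat 1 - scaleR (1/2) (gmat Dv \<Theta> \<Theta>)))"
proof -
  have N: "Dnorm Dv \<noteq> 0" by (rule Dnorm_nz[OF nz])
  have inv: "invertible (Amat Dv)" by (rule A_inv[OF nz])
  have hp: "Amat Dv ** hmat Dv = mat 1" "hmat Dv ** Amat Dv = mat 1" using hmat_props[OF inv] by auto
  define u0 where "u0 = hmat Dv *v rhs Dv e"
  have A0: "Amat Dv *v u0 = rhs Dv e" unfolding u0_def matrix_vector_mul_assoc hp(1) by simp
  have char: "(\<forall>v. resid Dv e u \<le> resid Dv e v) \<longleftrightarrow> Amat Dv *v u = rhs Dv e" for u
  proof
    assume m: "\<forall>v. resid Dv e u \<le> resid Dv e v"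
    have "resid Dv e u = resid Dv e u0 + Qf Dv (u - u0)" by (rule resid_min[OF N sym A0])
    moreover have "resid Dv e u \<le> resid Dv e u0" using m by blast
    ultimately have "Qf Dv (u - u0) \<le> 0" by simp
    hence "Qf Dv (u - u0) = 0" using Qf_nonneg[of Dv "u - u0"] by simp
    hence "u - u0 = 0" by (rule Qf_zero[OF nz])
    hence "u = u0" by simp
    thus "Amat Dv *v u = rhs Dv e" using A0 by simp
  next
    assume A: "Amat Dv *v u = rhs Dv e"
    show "\<forall>v. resid Dv e u \<le> resid Dv e v"
      using resid_min[OF N sym A] Qf_nonneg by (metis le_add_same_cancel1)
  qed
  have uh: "(\<forall>v. resid Dv e u \<le> resid Dv e v) \<Longrightarrow> u = hmat Dv *v rhs Dv e" for u
  proof -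
    assume "\<forall>v. resid Dv e u \<le> resid Dv e v"
    hence "Amat Dv *v u = rhs Dv e" using char by blast
    hence "hmat Dv *v (Amat Dv *v u) = hmat Dv *v rhs Dv e" by simp
    thus ?thesis unfolding matrix_vector_mul_assoc hp(2) by simp
  qed
  have ex1: "\<exists>!u. \<forall>v. resid Dv e u \<le> resid Dv e v"
  proof
    show "\<forall>v. resid Dv e u0 \<le> resid Dv e v" using char A0 by blast
  next
    fix u assume "\<forall>v. resid Dv e u \<le> resid Dv e v"
    thus "u = u0" unfolding u0_def by (rule uh)
  qed
  have form: "(\<forall>i. u $ i = (\<Sum>\<Theta>\<in>UNIV. \<Sum>l\<in>UNIV. \<Sum>m\<in>UNIV.
               (Dinv Dv \<Theta> $ l * hmat Dv $ i $ m + hmat Dv $ i $ l * Dinv Dv \<Theta> $ m) * e \<Theta> $ l $ m))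
        \<and> (\<forall>\<Theta> i j. (Dv \<Theta> $ i * u $ j + u $ i * Dv \<Theta> $ j) / 2 =
               (\<Sum>\<Lambda>\<in>UNIV. \<Sum>l\<in>UNIV. \<Sum>m\<in>UNIV. Gten Dv \<Theta> \<Lambda> i j l m * e \<Lambda> $ l $ m))" if m: "\<forall>v. resid Dv e u \<le> resid Dv e v" for u
  proof -
    from m have uu: "u = hmat Dv *v rhs Dv e" by (rule uh)
    have f: "\<And>i. u $ i = (\<Sum>\<Theta>\<in>UNIV. \<Sum>l\<in>UNIV. \<Sum>m\<in>UNIV.
               (Dinv Dv \<Theta> $ l * hmat Dv $ i $ m + hmat Dv $ i $ l * Dinv Dv \<Theta> $ m) * e \<Theta> $ l $ m)"
      unfolding uu by (rule u_formula)
    show ?thesis using f G_formula[OF f] by blast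
  qed
  show ?thesis using inv ex1 char form single_case[OF nz] by blast
qed

end
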